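(* Let $q$ be a prime power, $m\ge2$, $1\le k<n$. The set $\mathcal R_1^*\cap \mathcal K$ is in one-to-one correspondence with the set $$V_R := \{(\boldsymbol\alpha,\boldsymbol\beta)\in \mathbb{F}_{q^m}^k \times \mathbb{F}_{q^m}^{n-k-1} \mid \alpha_i,\ \alpha_i\beta_j \in \ker(\mathrm{Tr}_{\mathbb{F}_{q^m}/\mathbb{F}_q})\setminus\{0\} \text{ for all } i,j\},$$ which equals $\{(\boldsymbol\alpha,\boldsymbol\beta) \mid \alpha_i \in \ker(\mathrm{Tr}_{\mathbb{F}_{q^m}/\mathbb{F}_q})\setminus\{0\},\ \beta_j \in \bigcap_{i=1}^k\ker(\mathrm{T}_{\alpha_i})\setminus\{0\}\}$, via the map $\psi:V_R \to \mathcal R_1^*\cap \mathcal K$ given by $$(\boldsymbol\alpha,\boldsymbol\beta)\longmapsto (\alpha_1,\dots,\alpha_k)^T\,(1, \beta_1,\ldots, \beta_{n-k-1}).$$ Consequently $|\mathcal R_1^*\cap \mathcal K|\leq (q^{m-1}-1)^{n-1}$.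
   Context: $\mathrm{Tr}_{\mathbb{F}_{q^m}/\mathbb{F}_q}(\alpha)=\sum_{i=0}^{m-1}\alpha^{q^i}$, and for $\alpha\in\mathbb{F}_{q^m}^*$, $\mathrm{T}_\alpha:\mathbb{F}_{q^m}\to\mathbb{F}_q$ is $\beta\mapsto \mathrm{Tr}_{\mathbb{F}_{q^m}/\mathbb{F}_q}(\alpha\beta)$. $\mathcal R_1^*:=\{A\in (\mathbb{F}_{q^m}^* )^{k\times (n-k)} \mid \mathrm{rk}(A)=1\}$ and $\mathcal K:=\left(\ker \mathrm{Tr}_{\mathbb{F}_{q^m}/\mathbb{F}_q}\right)^{k\times(n-k)}$. *)

theory Defs
  imports "Jordan_Normal_Form.DL_Rank" "HOL-Computational_Algebra.Primes"
begin

text \<open>The field F_{q^m} is modelled by a finite field type 'a with CARD('a) = q^m.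
  The trace to the (unique) subfield F_q is given by its defining formula.\<close>

definition trace_qm :: "nat \<Rightarrow> nat \<Rightarrow> 'a::field \<Rightarrow> 'a" where
  "trace_qm q m a = (\<Sum>i<m. a ^ (q ^ i))"

definition T_map :: "nat \<Rightarrow> nat \<Rightarrow> 'a::field \<Rightarrow> 'a \<Rightarrow> 'a" where
  "T_map q m a b = trace_qm q m (a * b)"

definition ker_tr :: "nat \<Rightarrow> nat \<Rightarrow> 'a::field set" where
  "ker_tr q m = {a. trace_qm q m a = 0}"

definition rank_mat :: "'a::field mat \<Rightarrow> nat" where
  "rank_mat A = vec_space.rank (dim_row A) A"

definition R1_star :: "nat \<Rightarrow> nat \<Rightarrow> 'a::field mat set" where
  "R1_star k n = {A \<in> carrier_mat k (n - k).
      (\<forall>i<k. \<forall>j<n - k. A $$ (i, j) \<noteq> 0) \<and> rank_mat A = 1}"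

definition K_set :: "nat \<Rightarrow> nat \<Rightarrow> nat \<Rightarrow> nat \<Rightarrow> 'a::field mat set" where
  "K_set q m k n = {A \<in> carrier_mat k (n - k).
      \<forall>i<k. \<forall>j<n - k. A $$ (i, j) \<in> ker_tr q m}"

definition V_R :: "nat \<Rightarrow> nat \<Rightarrow> nat \<Rightarrow> nat \<Rightarrow> ('a::field vec \<times> 'a vec) set" where
  "V_R q m k n = {(\<alpha>, \<beta>). \<alpha> \<in> carrier_vec k \<and> \<beta> \<in> carrier_vec (n - k - 1) \<and>
      (\<forall>i<k. \<alpha> $ i \<in> ker_tr q m - {0} \<and>
         (\<forall>j<n - k - 1. \<alpha> $ i * \<beta> $ j \<in> ker_tr q m - {0}))}"

definition V_R' :: "nat \<Rightarrow> nat \<Rightarrow> nat \<Rightarrow> nat \<Rightarrow> ('a::field vec \<times> 'a vec) set" where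
  "V_R' q m k n = {(\<alpha>, \<beta>). \<alpha> \<in> carrier_vec k \<and> \<beta> \<in> carrier_vec (n - k - 1) \<and>
      (\<forall>i<k. \<alpha> $ i \<in> ker_tr q m - {0}) \<and>
      (\<forall>j<n - k - 1. \<beta> $ j \<in> (\<Inter>i\<in>{..<k}. {b. T_map q m (\<alpha> $ i) b = 0}) - {0})}"

definition psi :: "nat \<Rightarrow> nat \<Rightarrow> 'a::field vec \<times> 'a vec \<Rightarrow> 'a mat" where
  "psi k n = (\<lambda>(\<alpha>, \<beta>). mat k (n - k)
      (\<lambda>(i, j). \<alpha> $ i * (if j = 0 then 1 else \<beta> $ (j - 1))))"

end

theory Submission imports Defs "Jordan_Normal_Form.DL_Rank_Submatrix" "HOL-Computational_Algebra.Polynomial" begin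

lemma det2: assumes "A \<in> carrier_mat 2 2"
  shows "det A = A $$ (0,0) * A $$ (1,1) - A $$ (0,1) * A $$ (1,0)"
proof -
  have "det A = (\<Sum>j<2. A $$ (0,j) * cofactor A 0 j)"
    using laplace_expansion_row[OF assms, of 0] by simp
  also have "\<dots> = A $$ (0,0) * cofactor A 0 0 + A $$ (0,1) * cofactor A 0 1"
    by (simp add: numeral_2_eq_2)
  also have "cofactor A 0 0 = A $$ (1,1)"
    unfolding cofactor_def using assms
    by (subst det_single) (auto simp: mat_delete_def)
  also have "cofactor A 0 1 = - A $$ (1,0)"
    unfolding cofactor_def using assms
    by (subst det_single) (auto simp: mat_delete_def)
  finally show ?thesis by (simp add: algebra_simps)
qed

lemma pick0: "pick {0} 0 = 0" "pick {0, i} 0 = 0"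
  unfolding pick.simps by (rule Least_equality, auto)+

lemma pick1: "0 < i \<Longrightarrow> pick {0, i} 1 = (i::nat)"
proof -
  assume "0 < i"
  have "pick {0,i} 1 = (LEAST a. a \<in> {0,i} \<and> a > pick {0,i} 0)"
    using pick.simps(2)[of "{0,i}" 0] by simp
  also have "\<dots> = i" using \<open>0<i\<close> unfolding pick0 by (intro Least_equality) auto
  finally show "pick {0, i} 1 = i" .
qed

lemma rank_ge1:
  fixes A :: "'a::field mat"
  assumes "A \<in> carrier_mat k nc" "0 < k" "0 < nc" "A $$ (0,0) \<noteq> 0"
  shows "1 \<le> rank_mat A"
proof -
  have dr: "dim_row A = k" "dim_col A = nc" using assms by auto
  have c1: "{j. j < nc \<and> j \<in> {0}} = {0}" using assms by auto
  have c2: "{j. j < k \<and> j \<in> {0}} = {0}" using assms by auto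
  have sc: "submatrix A {0} {0} \<in> carrier_mat 1 1"
    by (rule carrier_matI) (simp_all only: dim_submatrix dr c1 c2, simp_all)
  have "det (submatrix A {0} {0}) = A $$ (0,0)"
  proof -
    have "submatrix A {0} {0} $$ (0,0) = A $$ (pick {0} 0, pick {0} 0)"
      by (rule submatrix_index) (simp_all only: dr c1 c2, simp_all)
    thus ?thesis using det_single[OF sc] by (simp add: pick0)
  qed
  hence "card {j. j < nc \<and> j \<in> {0}} \<le> vec_space.rank k A"
    using vec_space.rank_gt_minor[OF assms(1)] assms(4) by metis
  hence "card {0::nat} \<le> vec_space.rank k A" by (simp only: c1)
  thus ?thesis using assms(1) unfolding rank_mat_def by simp
qed

lemma rank1_minor:
  fixes A :: "'a::field mat"
  assumes "A \<in> carrier_mat k nc" "rank_mat A \<le> 1" "i < k" "j < nc"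
  shows "A $$ (i,j) * A $$ (0,0) = A $$ (i,0) * A $$ (0,j)"
proof (cases "i = 0 \<or> j = 0")
  case True thus ?thesis by (auto simp: mult.commute)
next
  case False
  hence ij: "0 < i" "0 < j" by auto
  have dr: "dim_row A = k" "dim_col A = nc" using assms by auto
  have c1: "{x. x < nc \<and> x \<in> {0,j}} = {0,j}" using assms ij by auto
  have c2: "{x. x < k \<and> x \<in> {0,i}} = {0,i}" using assms ij by auto
  have c3: "card {0,i} = 2" "card {0,j} = 2" using ij by auto
  have sc: "submatrix A {0,i} {0,j} \<in> carrier_mat 2 2"
    by (rule carrier_matI) (simp_all only: dim_submatrix dr c1 c2 c3)
  have "det (submatrix A {0,i} {0,j}) = A $$ (0,0) * A $$ (i,j) - A $$ (0,j) * A $$ (i,0)"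
  proof -
    have e: "\<And>a b. a < 2 \<Longrightarrow> b < 2 \<Longrightarrow> submatrix A {0,i} {0,j} $$ (a,b) = A $$ (pick {0,i} a, pick {0,j} b)"
      by (rule submatrix_index) (simp_all only: dr c1 c2 c3)
    show ?thesis using det2[OF sc] e[of 0 0, unfolded pick0] e[of 0 1, unfolded pick0 pick1[OF ij(2)]]
       e[of 1 0, unfolded pick0 pick1[OF ij(1)]] e[of 1 1, unfolded pick1[OF ij(1)] pick1[OF ij(2)]]
      by simp
  qed
  show ?thesis
  proof (rule ccontr)
    assume "\<not> ?thesis"
    hence "det (submatrix A {0,i} {0,j}) \<noteq> 0"
      unfolding \<open>det _ = _\<close> by (simp add: algebra_simps)
    hence "card {x. x < nc \<and> x \<in> {0,j}} \<le> vec_space.rank k A"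
      using vec_space.rank_gt_minor[OF assms(1)] by metis
    hence "card {0,j} \<le> vec_space.rank k A" by (simp only: c1)
    thus False using assms(1,2) ij c3 unfolding rank_mat_def by simp
  qed
qed
lemma deg_trpoly:
  assumes "2 \<le> q"
  shows "degree (\<Sum>i<Suc m. monom (1::'a::field) (q^i)) = q ^ m"
proof (induction m)
  case 0 then show ?case by (simp add: degree_monom_eq)
next
  case (Suc m)
  have "q ^ m < q ^ Suc m" using assms by simp
  then show ?case using Suc
    by (simp only: sum.lessThan_Suc, subst degree_add_eq_right) (simp_all add: degree_monom_eq)
qed

lemma card_ker:
  assumes "2 \<le> q" "1 \<le> m"
  shows "card (ker_tr q m :: 'a::field set) \<le> q ^ (m - 1)"
proof -
  obtain m' where m: "m = Suc m'" using assms by (cases m) auto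
  define P where "P = (\<Sum>i<Suc m'. monom (1::'a) (q^i))"
  have d: "degree P = q ^ m'" unfolding P_def by (rule deg_trpoly[OF assms(1)])
  have "P \<noteq> 0"
  proof
    assume "P = 0" hence "q ^ m' = 0" using d by simp
    thus False using assms by simp
  qed
  have "ker_tr q m = {x. poly P x = 0}"
    unfolding ker_tr_def trace_qm_def P_def m by (simp add: poly_sum poly_monom)
  thus ?thesis using card_poly_roots_bound[OF \<open>P \<noteq> 0\<close>] d m by simp
qed

lemma zero_ker: "2 \<le> q \<Longrightarrow> (0::'a::field) \<in> ker_tr q m"
  unfolding ker_tr_def trace_qm_def by simp

lemma VR_iff:
  fixes \<alpha> \<beta> :: "'a::field vec"
  assumes "1 \<le> k"
  shows "(\<forall>i<k. \<alpha> $ i \<in> ker_tr q m - {0} \<and> (\<forall>j<n - k - 1. \<alpha> $ i * \<beta> $ j \<in> ker_tr q m - {0}))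
    \<longleftrightarrow> (\<forall>i<k. \<alpha> $ i \<in> ker_tr q m - {0}) \<and>
      (\<forall>j<n - k - 1. \<beta> $ j \<in> (\<Inter>i\<in>{..<k}. {b. T_map q m (\<alpha> $ i) b = 0}) - {0})" (is "?L \<longleftrightarrow> ?R")
  proof
    assume h: ?L
    show ?R
    proof (intro conjI allI impI)
      fix j assume j: "j < n - k - 1"
      have "\<alpha> $ 0 * \<beta> $ j \<noteq> 0" using h j assms by auto
      hence "\<beta> $ j \<noteq> 0" by auto
      moreover have "\<forall>i<k. T_map q m (\<alpha> $ i) (\<beta> $ j) = 0"
        using h j unfolding T_map_def ker_tr_def by auto
      ultimately show "\<beta> $ j \<in> (\<Inter>i\<in>{..<k}. {b. T_map q m (\<alpha> $ i) b = 0}) - {0}" by auto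
    qed (use h in auto)
  next
    assume h: ?R
    show ?L
    proof (intro allI impI conjI)
      fix i assume i: "i < k"
      show "\<alpha> $ i \<in> ker_tr q m - {0}" using h i by auto
      fix j assume j: "j < n - k - 1"
      have "\<alpha> $ i \<noteq> 0" "\<beta> $ j \<noteq> 0" "T_map q m (\<alpha> $ i) (\<beta> $ j) = 0" using h i j by auto
      thus "\<alpha> $ i * \<beta> $ j \<in> ker_tr q m - {0}" unfolding T_map_def ker_tr_def by auto
    qed
  qed

lemma VR_eq:
  assumes "1 \<le> k"
  shows "V_R q m k n = (V_R' q m k n :: ('a::field vec \<times> 'a vec) set)"
  unfolding V_R_def V_R'_def by (simp only: VR_iff[OF assms])

lemma card_VR:
  assumes "1 \<le> k" "k < n"
  shows "card (V_R q m k n :: ('a::{finite,field} vec \<times> 'a vec) set) \<le> card (ker_tr q m - {0::'a}) ^ (n - 1)"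
proof -
  let ?S = "ker_tr q m - {0::'a}"
  define f where "f = (\<lambda>(\<alpha>::'a vec, \<beta>::'a vec). list_of_vec \<alpha> @ map (\<lambda>j. \<alpha> $ 0 * \<beta> $ j) [0..<n-k-1])"
  have inj: "inj_on f (V_R q m k n)"
  proof (rule inj_onI)
    fix x y assume x: "x \<in> V_R q m k n" and y: "y \<in> V_R q m k n" and e: "f x = f y"
    obtain a b where xab: "x = (a,b)" by force
    obtain a' b' where yab: "y = (a',b')" by force
    have ca: "a \<in> carrier_vec k" "b \<in> carrier_vec (n-k-1)" "a' \<in> carrier_vec k" "b' \<in> carrier_vec (n-k-1)"
      and a0: "a $ 0 \<noteq> 0" "a' $ 0 \<noteq> 0"
      using x y assms unfolding xab yab V_R_def by auto
    have l: "length (list_of_vec a) = length (list_of_vec a')" using ca by simp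
    from e have "list_of_vec a = list_of_vec a'" and
      m: "map (\<lambda>j. a $ 0 * b $ j) [0..<n-k-1] = map (\<lambda>j. a' $ 0 * b' $ j) [0..<n-k-1]"
      unfolding f_def xab yab using l by auto
    hence aa: "a = a'" by (metis vec_list)
    have "b = b'"
    proof (rule eq_vecI)
      fix j assume "j < dim_vec b'"
      hence "j < n-k-1" using ca by simp
      hence "a $ 0 * b $ j = a' $ 0 * b' $ j" using arg_cong[OF m, of "\<lambda>xs. xs ! j"] by simp
      thus "b $ j = b' $ j" using aa a0 by simp
    qed (use ca in simp)
    thus "x = y" using aa xab yab by simp
  qed
  have sub: "f ` V_R q m k n \<subseteq> {xs. set xs \<subseteq> ?S \<and> length xs = n - 1}"
  proof clarify
    fix a b :: "'a vec" assume ab: "(a,b) \<in> V_R q m k n"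
    hence ca: "a \<in> carrier_vec k" "b \<in> carrier_vec (n-k-1)"
      and h: "\<forall>i<k. a $ i \<in> ker_tr q m - {0} \<and> (\<forall>j<n - k - 1. a $ i * b $ j \<in> ker_tr q m - {0})"
      unfolding V_R_def by auto
    show "set (f (a,b)) \<subseteq> ?S \<and> length (f (a,b)) = n - 1"
    proof
      show "length (f (a,b)) = n - 1" unfolding f_def using ca assms by simp
      show "set (f (a,b)) \<subseteq> ?S"
      proof
        fix x assume "x \<in> set (f (a,b))"
        then consider "x \<in> set (list_of_vec a)" | j where "j < n-k-1" "x = a $ 0 * b $ j"
          unfolding f_def by auto
        thus "x \<in> ?S"
        proof cases
          case 1
          then obtain i where "i < length (list_of_vec a)" "x = list_of_vec a ! i"
            unfolding in_set_conv_nth by blast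
          hence "i < k" "x = a $ i" using ca by (simp_all add: list_of_vec_index)
          thus ?thesis using h by auto
        next
          case 2 thus ?thesis using h assms by auto
        qed
      qed
    qed
  qed
  have "card (V_R q m k n :: ('a vec \<times> 'a vec) set) = card (f ` V_R q m k n)" using card_image[OF inj] by simp
  also have "\<dots> \<le> card {xs. set xs \<subseteq> ?S \<and> length xs = n - 1}"
    by (rule card_mono[OF _ sub]) (simp add: finite_lists_length_eq)
  also have "\<dots> = card ?S ^ (n - 1)" by (simp add: card_lists_length_eq)
  finally show ?thesis .
qed

lemma psi_index: "i < k \<Longrightarrow> j < n - k \<Longrightarrow>
   psi k n (a, b) $$ (i, j) = a $ i * (if j = 0 then 1 else b $ (j - 1))"
  unfolding psi_def by simp

lemma psi_carrier: "psi k n ab \<in> carrier_mat k (n - k)"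
  unfolding psi_def by (cases ab) auto

lemma psi_inj:
  assumes "1 \<le> k" "k < n"
  shows "inj_on (psi k n) (V_R q m k n :: ('a::field vec \<times> 'a vec) set)"
proof (rule inj_onI)
  fix x y :: "'a vec \<times> 'a vec"
  assume x: "x \<in> V_R q m k n" and y: "y \<in> V_R q m k n" and e: "psi k n x = psi k n y"
  obtain a b where xab: "x = (a,b)" by force
  obtain a' b' where yab: "y = (a',b')" by force
  have ca: "a \<in> carrier_vec k" "b \<in> carrier_vec (n-k-1)" "a' \<in> carrier_vec k" "b' \<in> carrier_vec (n-k-1)"
    and a0: "a $ 0 \<noteq> 0"
    using x y assms unfolding xab yab V_R_def by auto
  have E: "a $ i * (if j = 0 then 1 else b $ (j - 1)) = a' $ i * (if j = 0 then 1 else b' $ (j - 1))"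
    if "i < k" "j < n - k" for i j
    using arg_cong[OF e, of "\<lambda>M. M $$ (i,j)"] that unfolding xab yab by (simp add: psi_index)
  have aa: "a = a'"
  proof (rule eq_vecI)
    fix i assume "i < dim_vec a'" hence "i < k" using ca by simp
    thus "a $ i = a' $ i" using E[of i 0] assms by simp
  qed (use ca in simp)
  have "b = b'"
  proof (rule eq_vecI)
    fix j assume "j < dim_vec b'" hence "Suc j < n - k" using ca by simp
    hence "a $ 0 * b $ j = a' $ 0 * b' $ j" using E[of 0 "Suc j"] assms by simp
    thus "b $ j = b' $ j" using aa a0 by simp
  qed (use ca in simp)
  thus "x = y" using aa xab yab by simp
qed

lemma psi_into:
  assumes "1 \<le> k" "k < n" "ab \<in> (V_R q m k n :: ('a::field vec \<times> 'a vec) set)"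
  shows "psi k n ab \<in> R1_star k n \<inter> K_set q m k n"
proof -
  obtain a b where ab: "ab = (a,b)" by force
  have ca: "a \<in> carrier_vec k" "b \<in> carrier_vec (n-k-1)"
    and h: "\<forall>i<k. a $ i \<in> ker_tr q m - {0} \<and> (\<forall>j<n - k - 1. a $ i * b $ j \<in> ker_tr q m - {0})"
    using assms(3) unfolding ab V_R_def by auto
  let ?A = "psi k n (a,b)"
  have C: "?A \<in> carrier_mat k (n - k)" by (rule psi_carrier)
  have ent: "?A $$ (i,j) \<in> ker_tr q m - {0}" if "i < k" "j < n - k" for i j
  proof (cases j)
    case 0 thus ?thesis using h that by (simp add: psi_index)
  next
    case (Suc j') hence "j' < n - k - 1" using that by simp
    thus ?thesis using h that Suc by (simp add: psi_index)
  qed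
  have "rank_mat ?A \<le> 1"
  proof -
    have dr: "dim_row ?A = k" using C by simp
    show ?thesis unfolding rank_mat_def dr
      by (rule vec_space.rank_le_1_product_entries[OF C,
          of "\<lambda>i. a $ i" "\<lambda>j. if j = 0 then 1 else b $ (j - 1)"])
       (use C in \<open>auto simp: psi_index\<close>)
  qed
  moreover have "1 \<le> rank_mat ?A"
    by (rule rank_ge1[OF C]) (use assms ent[of 0 0] in auto)
  ultimately show ?thesis using C ent unfolding ab R1_star_def K_set_def by auto
qed

lemma psi_onto:
  assumes "1 \<le> k" "k < n" "A \<in> R1_star k n \<inter> K_set q m k n"
  shows "A \<in> psi k n ` (V_R q m k n :: ('a::field vec \<times> 'a vec) set)"
proof -
  have C: "A \<in> carrier_mat k (n - k)" and nz: "\<forall>i<k. \<forall>j<n - k. A $$ (i, j) \<noteq> 0"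
    and r: "rank_mat A = 1" and kk: "\<forall>i<k. \<forall>j<n - k. A $$ (i, j) \<in> ker_tr q m"
    using assms(3) unfolding R1_star_def K_set_def by auto
  define a where "a = vec k (\<lambda>i. A $$ (i, 0))"
  define b where "b = vec (n - k - 1) (\<lambda>j. A $$ (0, Suc j) / A $$ (0, 0))"
  have A00: "A $$ (0,0) \<noteq> 0" using nz assms by auto
  have prod: "a $ i * b $ j = A $$ (i, Suc j)" if "i < k" "j < n - k - 1" for i j
  proof -
    have "A $$ (i, Suc j) * A $$ (0,0) = A $$ (i,0) * A $$ (0, Suc j)"
      using rank1_minor[OF C] r that by simp
    thus ?thesis unfolding a_def b_def using that A00 by (simp add: field_simps)
  qed
  have V: "(a, b) \<in> V_R q m k n"
    unfolding V_R_def using nz kk prod assms by (auto simp: a_def b_def)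
  have "psi k n (a,b) = A"
  proof (rule eq_matI)
    fix i j assume i: "i < dim_row A" and j: "j < dim_col A"
    hence ij: "i < k" "j < n - k" using C by auto
    show "psi k n (a,b) $$ (i,j) = A $$ (i,j)"
    proof (cases j)
      case 0 thus ?thesis using ij by (simp add: psi_index a_def)
    next
      case (Suc j') hence "j' < n - k - 1" using ij by simp
      thus ?thesis using ij Suc prod by (simp add: psi_index)
    qed
  qed (use C psi_carrier[of k n "(a,b)"] in auto)
  thus ?thesis using V by force
qed

theorem lemma4p10:
  fixes q m k n :: nat
  assumes "\<exists>p e. prime p \<and> e > 0 \<and> q = p ^ e"
    and "card (UNIV :: 'a set) = q ^ m"
    and "m \<ge> 2" and "1 \<le> k" and "k < n"
  shows "bij_betw (psi k n) (V_R q m k n :: ('a::{finite,field} vec \<times> 'a vec) set)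
            (R1_star k n \<inter> K_set q m k n)
       \<and> V_R q m k n = (V_R' q m k n :: ('a vec \<times> 'a vec) set)
       \<and> card (R1_star k n \<inter> K_set q m k n :: 'a mat set) \<le> (q ^ (m - 1) - 1) ^ (n - 1)"
proof (intro conjI)
  obtain p e where pe: "prime p" "e > 0" "q = p ^ e" using assms(1) by blast
  have q2: "2 \<le> q"
  proof -
    have "2 \<le> p" using pe(1) prime_ge_2_nat by blast
    also have "p \<le> p ^ e" using pe(2) \<open>2 \<le> p\<close> by (simp add: self_le_power)
    finally show ?thesis using pe(3) by simp
  qed
  show bij: "bij_betw (psi k n) (V_R q m k n :: ('a::{finite,field} vec \<times> 'a vec) set)
            (R1_star k n \<inter> K_set q m k n)"
    unfolding bij_betw_def
    using psi_inj[OF assms(4,5)] psi_into[OF assms(4,5)] psi_onto[OF assms(4,5)] by blast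
  show "V_R q m k n = (V_R' q m k n :: ('a vec \<times> 'a vec) set)" by (rule VR_eq[OF assms(4)])
  have "card (R1_star k n \<inter> K_set q m k n :: 'a mat set) = card (V_R q m k n :: ('a vec \<times> 'a vec) set)"
    using bij_betw_same_card[OF bij] by simp
  also have "\<dots> \<le> card (ker_tr q m - {0::'a}) ^ (n - 1)" by (rule card_VR[OF assms(4,5)])
  also have "\<dots> \<le> (q ^ (m - 1) - 1) ^ (n - 1)"
  proof (rule power_mono)
    have "card (ker_tr q m - {0::'a}) = card (ker_tr q m :: 'a set) - 1"
      by (rule card_Diff_singleton) (simp_all add: zero_ker[OF q2])
    moreover have "card (ker_tr q m :: 'a set) \<le> q ^ (m - 1)"
      by (rule card_ker[OF q2]) (use assms(3) in simp)
    ultimately show "card (ker_tr q m - {0::'a}) \<le> q ^ (m - 1) - 1" by simp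
  qed simp
  finally show "card (R1_star k n \<inter> K_set q m k n :: 'a mat set) \<le> (q ^ (m - 1) - 1) ^ (n - 1)" .
qed

end
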